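(* In the layer stripping setup (see context), let $T(\mathbf a_0)$ and $T(\mathbf b_0)$ be the $n\times n$ lower triangular Toeplitz matrices with first columns $\mathbf a_0$ and $\mathbf b_0$, and $K:=T(\mathbf a_0)T(\mathbf a_0)^*+T(\mathbf b_0)T(\mathbf b_0)^*$. Let $L\in\mathbb C^{n\times n}$ be the unit lower triangular matrix with entries $L_{ij}=a_{i-j,\,j+1}/a_{0,\,j+1}$ for $0\le j\le i\le n-1$ (and $L_{ij}=0$ for $i<j$), and $D:=\mathrm{diag}(a_{0,1}^2,a_{0,2}^2,\dots,a_{0,n}^2)$. Then $K=LDL^*$, and the vector $\boldsymbol\gamma=(\gamma_0,\dots,\gamma_{n-1})^T$ satisfies $$L\boldsymbol\gamma=\frac{1}{a_{0,0}}\mathbf b_0.$$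
   Context: For a Laurent polynomial $a$, $a^*(z):=\overline{a(1/\overline z)}$; for a matrix, $^*$ is the conjugate transpose. $\mathcal S$ is the set of pairs $(a,b)$ of Laurent polynomials with $aa^*+bb^*=1$ and $0<a^*(0)<\infty$; the NLFT of $\boldsymbol\gamma$ supported in $[p,q]$ is $\prod_{k=p}^{q}\frac{1}{\sqrt{1+|\gamma_k|^2}}\begin{pmatrix}1&\gamma_k z^k\\-\overline{\gamma_k}z^{-k}&1\end{pmatrix}=\begin{pmatrix}a&b\\-b^*&a^*\end{pmatrix}$ (ordered by increasing $k$), a bijection onto $\mathcal S$. Layer stripping setup: let $n\ge1$ and $(a,b)\in\mathcal S$ with $b$ a polynomial of degree at most $n-1$. Set $a_0^*:=a^*$, $b_0:=b$, and for $k=0,\dots,n-1$ define recursively $\gamma_k:=b_k(0)/a_k^*(0)$, $a_{k+1}^*:=(a_k^*+\overline{\gamma_k}b_k)/\sqrt{1+|\gamma_k|^2}$, $b_{k+1}:=(b_k-\gamma_k a_k^* )/(z\sqrt{1+|\gamma_k|^2})$ (well defined; $a_k^*,b_k$ are polynomials of degree at most $n-1-k$ with $a_k^*(0)>0$). Write $a_k^*(z)=\sum_{j=0}^{n-1-k}a_{j,k}z^j$, $b_k(z)=\sum_{j=0}^{n-1-k}b_{j,k}z^j$, $\mathbf a_0:=(a_{0,0},\dots,a_{n-1,0})^T$, $\mathbf b_0:=(b_{0,0},\dots,b_{n-1,0})^T$; conventions $a_{n-k,k}:=0$ for $0\le k\le n-1$ and $a_{0,n}:=1$. *)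

theory Defs
  imports Complex_Main "Jordan_Normal_Form.Schur_Decomposition"
begin

text \<open>Laurent polynomials over the complex numbers, represented by their
  coefficient functions: f k is the coefficient of z^k (k an integer),
  with finite support.\<close>

definition laurent :: "(int \<Rightarrow> complex) \<Rightarrow> bool" where
  "laurent f \<longleftrightarrow> finite {k. f k \<noteq> 0}"

text \<open>a^*(z) = conj(a(1/conj z)): coefficient of z^k in a^* is conj of coefficient of z^(-k) in a.\<close>
definition lstar :: "(int \<Rightarrow> complex) \<Rightarrow> (int \<Rightarrow> complex)" where
  "lstar f = (\<lambda>k. cnj (f (- k)))"

definition lmult :: "(int \<Rightarrow> complex) \<Rightarrow> (int \<Rightarrow> complex) \<Rightarrow> (int \<Rightarrow> complex)" where
  "lmult f g = (\<lambda>m. \<Sum>k\<in>{k. f k \<noteq> 0}. f k * g (m - k))"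

definition lone :: "int \<Rightarrow> complex" where
  "lone = (\<lambda>k. if k = 0 then 1 else 0)"

text \<open>The condition a^*(0) < \<infinity>
  means a^* has no negative powers of z; then a^*(0) is its constant coefficient, which
  must be a positive real number.\<close>
definition S_class :: "((int \<Rightarrow> complex) \<times> (int \<Rightarrow> complex)) set" where
  "S_class = {(a, b). laurent a \<and> laurent b \<and>
      (\<lambda>m. lmult a (lstar a) m + lmult b (lstar b) m) = lone \<and>
      (\<forall>k<0. lstar a k = 0) \<and> Im (lstar a 0) = 0 \<and> 0 < Re (lstar a 0)}"

text \<open>One layer stripping step: from (a_k^*, b_k) to (a_{k+1}^*, b_{k+1}).
  gamma_k = b_k(0)/a_k^*(0); division by z is the index shift.\<close>
definition ls_gamma :: "(int \<Rightarrow> complex) \<times> (int \<Rightarrow> complex) \<Rightarrow> complex" where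
  "ls_gamma p = snd p 0 / fst p 0"

definition ls_step :: "(int \<Rightarrow> complex) \<times> (int \<Rightarrow> complex) \<Rightarrow> (int \<Rightarrow> complex) \<times> (int \<Rightarrow> complex)" where
  "ls_step p = (let g = ls_gamma p; s = complex_of_real (sqrt (1 + (cmod g)\<^sup>2)) in
     ((\<lambda>j. (fst p j + cnj g * snd p j) / s),
      (\<lambda>j. (snd p (j + 1) - g * fst p (j + 1)) / s)))"

text \<open>ls_seq a b k = (a_k^*, b_k), starting from (a_0^*, b_0) = (a^*, b).\<close>
primrec ls_seq :: "(int \<Rightarrow> complex) \<Rightarrow> (int \<Rightarrow> complex) \<Rightarrow> nat \<Rightarrow> (int \<Rightarrow> complex) \<times> (int \<Rightarrow> complex)" where
  "ls_seq a b 0 = (lstar a, b)"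
| "ls_seq a b (Suc k) = ls_step (ls_seq a b k)"

definition ls_gam :: "(int \<Rightarrow> complex) \<Rightarrow> (int \<Rightarrow> complex) \<Rightarrow> nat \<Rightarrow> complex" where
  "ls_gam a b k = ls_gamma (ls_seq a b k)"

text \<open>a_{j,k}: coefficient of z^j in a_k^*, with the convention a_{0,n} := 1.
  (The convention a_{n-k,k} := 0 agrees with the coefficient, since deg a_k^* \<le> n-1-k.)\<close>
definition acoef :: "nat \<Rightarrow> (int \<Rightarrow> complex) \<Rightarrow> (int \<Rightarrow> complex) \<Rightarrow> nat \<Rightarrow> nat \<Rightarrow> complex" where
  "acoef n a b j k = (if j = 0 \<and> k = n then 1 else fst (ls_seq a b k) (int j))"

definition bcoef :: "(int \<Rightarrow> complex) \<Rightarrow> (int \<Rightarrow> complex) \<Rightarrow> nat \<Rightarrow> nat \<Rightarrow> complex" where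
  "bcoef a b j k = snd (ls_seq a b k) (int j)"

definition lower_toeplitz :: "nat \<Rightarrow> complex vec \<Rightarrow> complex mat" where
  "lower_toeplitz n v = mat n n (\<lambda>(i, j). if j \<le> i then v $ (i - j) else 0)"

definition a0_vec :: "nat \<Rightarrow> (int \<Rightarrow> complex) \<Rightarrow> (int \<Rightarrow> complex) \<Rightarrow> complex vec" where
  "a0_vec n a b = vec n (\<lambda>j. acoef n a b j 0)"

definition b0_vec :: "nat \<Rightarrow> (int \<Rightarrow> complex) \<Rightarrow> (int \<Rightarrow> complex) \<Rightarrow> complex vec" where
  "b0_vec n a b = vec n (\<lambda>j. bcoef a b j 0)"

definition K_mat :: "nat \<Rightarrow> (int \<Rightarrow> complex) \<Rightarrow> (int \<Rightarrow> complex) \<Rightarrow> complex mat" where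
  "K_mat n a b = lower_toeplitz n (a0_vec n a b) * mat_adjoint (lower_toeplitz n (a0_vec n a b))
     + lower_toeplitz n (b0_vec n a b) * mat_adjoint (lower_toeplitz n (b0_vec n a b))"

definition L_mat :: "nat \<Rightarrow> (int \<Rightarrow> complex) \<Rightarrow> (int \<Rightarrow> complex) \<Rightarrow> complex mat" where
  "L_mat n a b = mat n n (\<lambda>(i, j). if j \<le> i then acoef n a b (i - j) (j + 1) / acoef n a b 0 (j + 1) else 0)"

definition D_mat :: "nat \<Rightarrow> (int \<Rightarrow> complex) \<Rightarrow> (int \<Rightarrow> complex) \<Rightarrow> complex mat" where
  "D_mat n a b = mat n n (\<lambda>(i, j). if i = j then (acoef n a b 0 (j + 1))\<^sup>2 else 0)"

definition gamma_vec :: "nat \<Rightarrow> (int \<Rightarrow> complex) \<Rightarrow> (int \<Rightarrow> complex) \<Rightarrow> complex vec" where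
  "gamma_vec n a b = vec n (\<lambda>k. ls_gam a b k)"

end

theory Submission
  imports Defs
begin


definition al :: "(int \<Rightarrow> complex) \<Rightarrow> (int \<Rightarrow> complex) \<Rightarrow> nat \<Rightarrow> int \<Rightarrow> complex" where
  "al a b k j = fst (ls_seq a b k) j"
definition be :: "(int \<Rightarrow> complex) \<Rightarrow> (int \<Rightarrow> complex) \<Rightarrow> nat \<Rightarrow> int \<Rightarrow> complex" where
  "be a b k j = snd (ls_seq a b k) j"
definition sg :: "(int \<Rightarrow> complex) \<Rightarrow> (int \<Rightarrow> complex) \<Rightarrow> nat \<Rightarrow> real" where
  "sg a b k = sqrt (1 + (cmod (ls_gam a b k))\<^sup>2)"

lemma gam_eq: "ls_gam a b k = be a b k 0 / al a b k 0"
  unfolding ls_gam_def ls_gamma_def al_def be_def by simp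

lemma al_Suc: "al a b (Suc k) j = (al a b k j + cnj (ls_gam a b k) * be a b k j) / complex_of_real (sg a b k)"
  unfolding al_def be_def sg_def ls_gam_def by (simp add: ls_step_def Let_def)

lemma be_Suc: "be a b (Suc k) j = (be a b k (j+1) - ls_gam a b k * al a b k (j+1)) / complex_of_real (sg a b k)"
  unfolding al_def be_def sg_def ls_gam_def by (simp add: ls_step_def Let_def)

lemma cns: "(complex_of_real (cmod z))^2 = z * cnj z"
  by (metis complex_norm_square of_real_power)

lemma sg_pos: "sg a b k > 0" unfolding sg_def
  by (intro real_sqrt_gt_zero) (simp add: add_pos_nonneg)

lemma sg_sq: "(complex_of_real (sg a b k))^2 = 1 + ls_gam a b k * cnj (ls_gam a b k)"
proof -
  have "(sg a b k)^2 = 1 + (cmod (ls_gam a b k))\<^sup>2" unfolding sg_def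
    by (rule real_sqrt_pow2) simp
  hence "(complex_of_real (sg a b k))^2 = 1 + (complex_of_real (cmod (ls_gam a b k)))\<^sup>2"
    by (metis of_real_1 of_real_add of_real_power)
  thus ?thesis by (simp only: cns)
qed

lemma frac2: fixes P Q R W c :: complex
  shows "(P/c)*(Q/c) + (R/c)*(W/c) = (P*Q+R*W)/(c*c)"
  by (simp add: add_divide_distrib)

lemma frac3: fixes P R g c :: complex
  shows "(g*(P/c) + R/c)/c = (g*P + R)/(c*c)"
  by (simp add: add_divide_distrib)

lemma unit_alg:
  fixes x y u v g :: complex and s :: real
  assumes "s > 0" "(complex_of_real s)^2 = 1 + g * cnj g"
  shows "((x + cnj g * y)/s) * cnj ((u + cnj g * v)/s) + ((y - g*x)/s) * cnj ((v - g*u)/s)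
       = x * cnj u + y * cnj v" (is "?lhs = _")
proof -
  have s0: "complex_of_real s \<noteq> 0" using assms by simp
  have nz: "1 + g * cnj g \<noteq> 0" using assms(2) s0 by (metis power_not_zero)
  have e1: "cnj ((u + cnj g * v)/s) = (cnj u + g * cnj v)/s" by simp
  have e2: "cnj ((v - g*u)/s) = (cnj v - cnj g * cnj u)/s" by simp
  have "((x + cnj g * y)/s) * cnj ((u + cnj g * v)/s) + ((y - g*x)/s) * cnj ((v - g*u)/s)
     = ((x + cnj g * y) * (cnj u + g * cnj v) + (y - g*x) * (cnj v - cnj g * cnj u)) / (complex_of_real s * complex_of_real s)"
    unfolding e1 e2 by (rule frac2)
  also have "(x + cnj g * y) * (cnj u + g * cnj v) + (y - g*x) * (cnj v - cnj g * cnj u)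
     = (x * cnj u + y * cnj v) * (1 + g * cnj g)"
    by (simp add: algebra_simps)
  also have "complex_of_real s * complex_of_real s = 1 + g * cnj g"
    using assms(2) by (simp add: power2_eq_square)
  finally show ?thesis using nz by simp
qed

lemma inv_alg:
  fixes x y g :: complex and s :: real
  assumes "s > 0" "(complex_of_real s)^2 = 1 + g * cnj g"
  shows "(g*((x + cnj g * y)/s) + (y - g*x)/s)/s = y" (is "?lhs = _")
proof -
  have s0: "complex_of_real s \<noteq> 0" using assms by simp
  have nz: "1 + g * cnj g \<noteq> 0" using assms(2) s0 by (metis power_not_zero)
  have "(g*((x + cnj g * y)/s) + (y - g*x)/s)/s = ((g*(x + cnj g * y) + (y - g*x))) / (complex_of_real s * complex_of_real s)"
    by (rule frac3)
  also have "g*(x + cnj g * y) + (y - g*x) = y * (1 + g * cnj g)"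
    by (simp add: algebra_simps)
  also have "complex_of_real s * complex_of_real s = 1 + g * cnj g"
    using assms(2) by (simp add: power2_eq_square)
  finally show ?thesis using nz by simp
qed

lemma step0:
  assumes "al a b k 0 = complex_of_real r" "r > 0"
  shows "al a b (Suc k) 0 = complex_of_real (r * sg a b k)" "be a b (Suc k) (-1) = 0"
proof -
  let ?c = "be a b k 0"
  have g: "ls_gam a b k = ?c / r" using assms by (simp add: gam_eq)
  have s: "sg a b k = sqrt (1 + (cmod ?c / r)^2)" unfolding sg_def g
    using assms by (simp add: norm_divide)
  have "cnj (?c / r) * ?c = (?c * cnj ?c) / complex_of_real r"
    by (simp add: mult.commute)
  also have "\<dots> = complex_of_real ((cmod ?c)^2 / r)"
    by (simp add: complex_norm_square[symmetric])
  finally have cc: "cnj (?c / r) * ?c = complex_of_real ((cmod ?c)^2 / r)" .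
  hence "al a b (Suc k) 0 = complex_of_real ((r + (cmod ?c)^2 / r) / sg a b k)"
    using assms by (simp add: al_Suc g cc)
  also have "(r + (cmod ?c)^2 / r) / sg a b k = r * sg a b k"
  proof -
    have p: "sg a b k > 0" by (rule sg_pos)
    have "(sg a b k)^2 = 1 + (cmod ?c / r)^2" unfolding s by (simp add: add_nonneg_nonneg)
    hence "r + (cmod ?c)^2 / r = r * (sg a b k)^2" using assms(2)
      by (simp add: field_simps power2_eq_square)
    thus ?thesis using p by (simp add: power2_eq_square)
  qed
  finally show "al a b (Suc k) 0 = complex_of_real (r * sg a b k)" .
  show "be a b (Suc k) (-1) = 0" using assms by (simp add: be_Suc g)
qed

lemma al0_pos:
  assumes "al a b 0 0 = complex_of_real r0" "r0 > 0"
  shows "\<exists>r>0. al a b k 0 = complex_of_real r"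
proof (induction k)
  case 0 then show ?case using assms by blast
next
  case (Suc k)
  then obtain r where r: "r > 0" "al a b k 0 = complex_of_real r" by blast
  show ?case using step0(1)[OF r(2) r(1)] r(1) sg_pos[of a b k]
    by (intro exI[of _ "r * sg a b k"]) simp
qed



definition Q :: "(int \<Rightarrow> complex) \<Rightarrow> (int \<Rightarrow> complex) \<Rightarrow> nat \<Rightarrow> nat \<Rightarrow> nat \<Rightarrow> complex" where
  "Q a b k i j = (\<Sum>t\<le>min i j. al a b k (int (i-t)) * cnj (al a b k (int (j-t)))
        + be a b k (int (i-t)) * cnj (be a b k (int (j-t))))"

lemma be_Suc': "be a b (Suc k) (x - 1) = (be a b k x - ls_gam a b k * al a b k x) / complex_of_real (sg a b k)"
  using be_Suc[of a b k "x - 1"] by simp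

lemma pw: "al a b k x * cnj (al a b k y) + be a b k x * cnj (be a b k y)
  = al a b (Suc k) x * cnj (al a b (Suc k) y) + be a b (Suc k) (x-1) * cnj (be a b (Suc k) (y-1))"
  unfolding al_Suc be_Suc' by (rule unit_alg[symmetric, OF sg_pos sg_sq])

lemma gam_inv: "be a b k x = (ls_gam a b k * al a b (Suc k) x + be a b (Suc k) (x-1)) / complex_of_real (sg a b k)"
  unfolding al_Suc be_Suc' by (rule inv_alg[symmetric, OF sg_pos sg_sq])

lemma Q_rec:
  assumes B: "\<forall>k. be a b (Suc k) (-1) = 0"
  shows "Q a b k i j = al a b (Suc k) (int i) * cnj (al a b (Suc k) (int j))
     + (if i = 0 \<or> j = 0 then 0 else Q a b (Suc k) (i-1) (j-1))"
proof -
  define F where "F t = al a b (Suc k) (int (i-t)) * cnj (al a b (Suc k) (int (j-t)))" for t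
  define G where "G t = be a b (Suc k) (int (i-t) - 1) * cnj (be a b (Suc k) (int (j-t) - 1))" for t
  have QFG: "Q a b k i j = (\<Sum>t\<le>min i j. F t) + (\<Sum>t\<le>min i j. G t)"
    unfolding Q_def pw F_def G_def by (simp add: sum.distrib)
  show ?thesis
  proof (cases "i = 0 \<or> j = 0")
    case True
    hence "min i j = 0" by auto
    moreover have "G 0 = 0" using True B unfolding G_def by auto
    ultimately show ?thesis using True QFG unfolding F_def by auto
  next
    case False
    then obtain i' j' where ij: "i = Suc i'" "j = Suc j'" by (meson not0_implies_Suc)
    define m where "m = min i' j'"
    have mm: "min i j = Suc m" using ij m_def by simp
    have s1: "(\<Sum>t\<le>min i j. F t) = F 0 + (\<Sum>t\<le>m. F (Suc t))"
      unfolding mm by (rule sum.atMost_Suc_shift)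
    have s2: "(\<Sum>t\<le>min i j. G t) = (\<Sum>t\<le>m. G t)"
    proof -
      have "G (Suc m) = 0" using B ij m_def unfolding G_def
        by (cases "i' \<le> j'") (auto simp: min_def)
      thus ?thesis unfolding mm by simp
    qed
    have q2: "Q a b (Suc k) (i-1) (j-1) = (\<Sum>t\<le>m. F (Suc t)) + (\<Sum>t\<le>m. G t)"
      unfolding Q_def F_def G_def m_def ij sum.distrib[symmetric]
      by (rule sum.cong) (auto simp: of_nat_diff)
    show ?thesis using QFG s1 s2 q2 False unfolding F_def by simp
  qed
qed

lemma Q_closed:
  assumes B: "\<forall>k. be a b (Suc k) (-1) = 0"
  shows "Q a b k i j = (\<Sum>t\<le>min i j. al a b (k+t+1) (int (i-t)) * cnj (al a b (k+t+1) (int (j-t))))"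
proof (induction i arbitrary: k j)
  case 0
  show ?case using Q_rec[OF B, of k 0 j] by simp
next
  case (Suc i)
  show ?case
  proof (cases j)
    case 0
    show ?thesis using Q_rec[OF B, of k "Suc i" j] 0 by simp
  next
    case (Suc j')
    have "Q a b k (Suc i) j = al a b (Suc k) (int (Suc i)) * cnj (al a b (Suc k) (int j)) + Q a b (Suc k) i j'"
      using Q_rec[OF B, of k "Suc i" j] Suc by simp
    also have "Q a b (Suc k) i j' = (\<Sum>t\<le>min i j'. al a b (Suc k+t+1) (int (i-t)) * cnj (al a b (Suc k+t+1) (int (j'-t))))"
      by (rule Suc.IH)
    also have "al a b (Suc k) (int (Suc i)) * cnj (al a b (Suc k) (int j)) + \<dots>
       = (\<Sum>t\<le>Suc (min i j'). al a b (k+t+1) (int (Suc i-t)) * cnj (al a b (k+t+1) (int (j-t))))"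
      unfolding sum.atMost_Suc_shift using Suc by simp
    finally show ?thesis using Suc by simp
  qed
qed

lemma H_ind:
  assumes B: "\<forall>k. be a b (Suc k) (-1) = 0" and NZ: "\<forall>k. al a b k 0 \<noteq> 0"
    and H0: "\<forall>j\<le>n-1. Q a b 0 (n-1) j = (if j = n-1 then 1 else 0)"
  shows "k \<le> n-1 \<Longrightarrow> \<forall>j\<le>n-1-k. Q a b k (n-1-k) j = (if j = n-1-k then 1 else 0)"
proof (induction k)
  case 0 then show ?case using H0 by simp
next
  case (Suc k)
  define d where "d = n-1-k"
  have d1: "d \<ge> 1" "n-1-Suc k = d-1" using Suc.prems d_def by auto
  have IH: "\<forall>j\<le>d. Q a b k d j = (if j = d then 1 else 0)" using Suc d_def by auto
  have "Q a b k d 0 = al a b (Suc k) (int d) * cnj (al a b (Suc k) 0)"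
    using Q_rec[OF B, of k d 0] by simp
  moreover have "Q a b k d 0 = 0" using IH d1 by auto
  ultimately have z: "al a b (Suc k) (int d) = 0" using NZ by simp
  show ?case unfolding d1(2)
  proof (intro allI impI)
    fix j assume j: "j \<le> d-1"
    have "Q a b k d (Suc j) = Q a b (Suc k) (d-1) j"
      using Q_rec[OF B, of k d "Suc j"] z d1 by simp
    moreover have "Q a b k d (Suc j) = (if Suc j = d then 1 else 0)" using IH j d1 by auto
    moreover have "(Suc j = d) = (j = d-1)" using d1 by auto
    ultimately show "Q a b (Suc k) (d-1) j = (if j = d-1 then 1 else 0)" by simp
  qed
qed

lemma gam_sum:
  assumes P: "\<forall>k. \<exists>r>0. al a b k 0 = complex_of_real r"
  shows "be a b k (int i) / al a b k 0 = (\<Sum>t\<le>i. ls_gam a b (k+t) * al a b (k+t+1) (int (i-t)) / al a b (k+t+1) 0)"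
proof (induction i arbitrary: k)
  case 0
  obtain r where r: "r>0" "al a b (Suc k) 0 = complex_of_real r" using P by blast
  show ?case using r by (simp add: gam_eq)
next
  case (Suc i)
  obtain r where r: "r>0" "al a b k 0 = complex_of_real r" using P by blast
  have a1: "al a b (Suc k) 0 = al a b k 0 * complex_of_real (sg a b k)"
    using step0(1)[OF r(2) r(1)] r by simp
  have s0: "complex_of_real (sg a b k) \<noteq> 0" using sg_pos[of a b k] by simp
  have a0: "al a b k 0 \<noteq> 0" using r by simp
  have "be a b k (int (Suc i)) / al a b k 0
     = (ls_gam a b k * al a b (Suc k) (int (Suc i)) + be a b (Suc k) (int i)) / al a b (Suc k) 0"
    unfolding gam_inv[of a b k "int (Suc i)"] a1 using s0 a0 by simp
  also have "\<dots> = ls_gam a b k * al a b (Suc k) (int (Suc i)) / al a b (Suc k) 0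
      + be a b (Suc k) (int i) / al a b (Suc k) 0" by (simp add: add_divide_distrib)
  also note Suc.IH[of "Suc k"]
  finally show ?case unfolding sum.atMost_Suc_shift by simp
qed



lemma lmult_I:
  assumes "finite {k. f k \<noteq> 0}" "finite I" "\<forall>k. k \<notin> I \<longrightarrow> f k * g (m - k) = 0"
  shows "lmult f g m = (\<Sum>k\<in>I. f k * g (m - k))"
proof -
  let ?F = "{k. f k \<noteq> 0}"
  have "lmult f g m = (\<Sum>k\<in>?F \<union> I. f k * g (m - k))"
    unfolding lmult_def using assms by (intro sum.mono_neutral_left) auto
  also have "\<dots> = (\<Sum>k\<in>I. f k * g (m - k))"
    using assms by (intro sum.mono_neutral_right) auto
  finally show ?thesis .
qed

lemma lstar_app: "lstar f x = cnj (f (- x))" unfolding lstar_def by simp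

lemma finb: assumes bs: "\<forall>k. (k < 0 \<or> k > int n - 1) \<longrightarrow> b k = 0"
  shows "finite {k. b k \<noteq> 0}"
proof -
  have "{k. b k \<noteq> 0} \<subseteq> {0..int n - 1}"
  proof
    fix k assume "k \<in> {k. b k \<noteq> 0}"
    thus "k \<in> {0..int n - 1}" using bs[rule_format, of k] by (cases "k < 0"; cases "int n - 1 < k") auto
  qed
  thus ?thesis by (rule finite_subset) simp
qed

lemma deg_bound:
  assumes la: "laurent a" and neg: "\<forall>k<0. lstar a k = 0" and a0: "lstar a 0 \<noteq> 0"
    and idt: "\<forall>m. lmult a (lstar a) m + lmult b (lstar b) m = lone m"
    and bs: "\<forall>k. (k < 0 \<or> k > int n - 1) \<longrightarrow> b k = 0" and n1: "n \<ge> 1"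
  shows "\<forall>d\<ge>int n. lstar a d = 0"
proof (rule ccontr)
  have fb: "finite {k. b k \<noteq> 0}" using bs by (rule finb)
  assume "\<not> ?thesis"
  then obtain d0 where d0: "d0 \<ge> int n" "lstar a d0 \<noteq> 0" by auto
  define S where "S = {j. lstar a j \<noteq> 0}"
  have "S \<subseteq> uminus ` {k. a k \<noteq> 0}"
  proof
    fix j assume "j \<in> S"
    hence "a (-j) \<noteq> 0" unfolding S_def lstar_app by auto
    thus "j \<in> uminus ` {k. a k \<noteq> 0}" by (intro image_eqI[of _ _ "-j"]) auto
  qed
  moreover have "finite {k. a k \<noteq> 0}" using la unfolding laurent_def .
  ultimately have fS: "finite S" by (meson finite_imageI finite_subset)
  define d where "d = Max S"
  have dS: "d \<in> S" using fS d0 unfolding d_def S_def by (intro Max_in) auto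
  have dmax: "\<And>j. j \<in> S \<Longrightarrow> j \<le> d" using fS unfolding d_def by simp
  have dge: "d \<ge> int n" using dmax[of d0] d0 unfolding S_def by simp
  have l1: "lmult a (lstar a) d = (\<Sum>k\<in>{0}. a k * lstar a (d - k))"
  proof (rule lmult_I)
    show "finite {k. a k \<noteq> 0}" using la unfolding laurent_def .
    show "\<forall>k. k \<notin> {0} \<longrightarrow> a k * lstar a (d - k) = 0"
    proof (intro allI impI)
      fix k :: int assume k: "k \<notin> {0}"
      show "a k * lstar a (d - k) = 0"
      proof (cases "a k = 0")
        case False
        hence "lstar a (-k) \<noteq> 0" unfolding lstar_app by simp
        hence "k < 0" using neg[rule_format, of "-k"] k by (cases "k > 0") auto
        have "d - k \<notin> S"
        proof
          assume "d - k \<in> S" hence "d - k \<le> d" by (rule dmax)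
          with \<open>k < 0\<close> show False by simp
        qed
        thus ?thesis unfolding S_def by simp
      qed simp
    qed
  qed simp
  have l2: "lmult b (lstar b) d = (\<Sum>k\<in>{}. b k * lstar b (d - k))"
  proof (rule lmult_I)
    show "finite {k. b k \<noteq> 0}" by (rule fb)
    show "\<forall>k. k \<notin> {} \<longrightarrow> b k * lstar b (d - k) = 0"
    proof (intro allI impI)
      fix k :: int
      show "b k * lstar b (d - k) = 0"
      proof (cases "b k = 0")
        case False
        hence "k \<le> int n - 1" using bs[rule_format, of k] by (cases "int n - 1 < k") auto
        hence "b (- (d - k)) = 0" using bs[rule_format, of "k - d"] dge by auto
        thus ?thesis unfolding lstar_app by simp
      qed simp
    qed
  qed simp
  have "lone d = 0" using dge n1 unfolding lone_def by simp
  hence "a 0 * lstar a d = 0" using idt[rule_format, of d] l1 l2 by simp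
  moreover have "a 0 \<noteq> 0" using a0 unfolding lstar_app by simp
  ultimately show False using dS unfolding S_def by simp
qed

lemma H0:
  assumes la: "laurent a" and neg: "\<forall>k<0. lstar a k = 0" and a0: "lstar a 0 \<noteq> 0"
    and idt: "\<forall>m. lmult a (lstar a) m + lmult b (lstar b) m = lone m"
    and bs: "\<forall>k. (k < 0 \<or> k > int n - 1) \<longrightarrow> b k = 0" and n1: "n \<ge> 1"
  shows "\<forall>j\<le>n-1. Q a b 0 (n-1) j = (if j = n-1 then 1 else 0)"
proof (intro allI impI)
  fix j assume j: "j \<le> n-1"
  have deg: "\<forall>d\<ge>int n. lstar a d = 0" by (rule deg_bound[OF assms])
  define m where "m = int (n-1) - int j"
  have fb: "finite {k. b k \<noteq> 0}" using bs by (rule finb)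
  have fa: "finite {k. a k \<noteq> 0}" using la unfolding laurent_def .
  have inj1: "inj_on (\<lambda>t::nat. int t - int j) {..j}" by (rule inj_onI) simp
  have inj2: "inj_on (\<lambda>t::nat. int (n-1) - int t) {..j}" by (rule inj_onI) simp
  have L1: "lmult a (lstar a) m = (\<Sum>k\<in>(\<lambda>t::nat. int t - int j) ` {..j}. a k * lstar a (m - k))"
  proof (rule lmult_I[OF fa])
    show "\<forall>k. k \<notin> (\<lambda>t::nat. int t - int j) ` {..j} \<longrightarrow> a k * lstar a (m - k) = 0"
    proof (intro allI impI)
      fix k assume k: "k \<notin> (\<lambda>t::nat. int t - int j) ` {..j}"
      have "k > 0 \<or> k < - int j"
      proof (rule ccontr)
        assume "\<not> (k > 0 \<or> k < - int j)"
        hence "k = int (nat (k + int j)) - int j" "nat (k + int j) \<in> {..j}" by auto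
        thus False using k by blast
      qed
      thus "a k * lstar a (m - k) = 0"
      proof
        assume "k > 0" hence "lstar a (-k) = 0" using neg[rule_format, of "-k"] by simp
        thus ?thesis unfolding lstar_app by simp
      next
        assume "k < - int j" hence "m - k \<ge> int n" unfolding m_def using n1 by simp
        thus ?thesis using deg[rule_format, of "m-k"] by simp
      qed
    qed
  qed simp
  also have "\<dots> = (\<Sum>t\<le>j. lstar a (int (n-1-t)) * cnj (lstar a (int (j-t))))"
    unfolding sum.reindex[OF inj1]
  proof (rule sum.cong)
    fix t assume t: "t \<in> {..j}"
    have e1: "m - (int t - int j) = int (n-1-t)" using t j n1 unfolding m_def by (simp add: of_nat_diff)
    have e2: "cnj (lstar a (int (j-t))) = a (int t - int j)" using t unfolding lstar_app by (simp add: of_nat_diff)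
    show "((\<lambda>k. a k * lstar a (m - k)) \<circ> (\<lambda>t. int t - int j)) t = lstar a (int (n-1-t)) * cnj (lstar a (int (j-t)))"
      unfolding o_def e1 e2 by simp
  qed simp
  finally have L1': "lmult a (lstar a) m = \<dots>" .
  have L2: "lmult b (lstar b) m = (\<Sum>k\<in>(\<lambda>t::nat. int (n-1) - int t) ` {..j}. b k * lstar b (m - k))"
  proof (rule lmult_I[OF fb])
    show "\<forall>k. k \<notin> (\<lambda>t::nat. int (n-1) - int t) ` {..j} \<longrightarrow> b k * lstar b (m - k) = 0"
    proof (intro allI impI)
      fix k assume k: "k \<notin> (\<lambda>t::nat. int (n-1) - int t) ` {..j}"
      have "k > int n - 1 \<or> k < m"
      proof (rule ccontr)
        assume "\<not> (k > int n - 1 \<or> k < m)"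
        hence "k = int (n-1) - int (nat (int (n-1) - k))" "nat (int (n-1) - k) \<in> {..j}"
          using n1 j unfolding m_def by auto
        thus False using k by blast
      qed
      thus "b k * lstar b (m - k) = 0"
      proof
        assume "k > int n - 1" thus ?thesis using bs[rule_format, of k] by simp
      next
        assume "k < m" hence "b (- (m - k)) = 0" using bs[rule_format, of "k-m"] by simp
        thus ?thesis unfolding lstar_app by simp
      qed
    qed
  qed simp
  also have "\<dots> = (\<Sum>t\<le>j. b (int (n-1-t)) * cnj (b (int (j-t))))"
    unfolding sum.reindex[OF inj2]
  proof (rule sum.cong)
    fix t assume t: "t \<in> {..j}"
    have e1: "int (n-1) - int t = int (n-1-t)" using t j n1 by (simp add: of_nat_diff)
    have e2: "- (m - (int (n-1) - int t)) = int (j-t)" using t j n1 unfolding m_def by (simp add: of_nat_diff)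
    show "((\<lambda>k. b k * lstar b (m - k)) \<circ> (\<lambda>t. int (n-1) - int t)) t = b (int (n-1-t)) * cnj (b (int (j-t)))"
      unfolding o_def lstar_app e2 unfolding e1 by simp
  qed simp
  finally have L2': "lmult b (lstar b) m = \<dots>" .
  have "Q a b 0 (n-1) j = lmult a (lstar a) m + lmult b (lstar b) m"
    unfolding L1' L2' Q_def al_def be_def using j by (simp add: sum.distrib min_def)
  also have "\<dots> = lone m" using idt by simp
  also have "\<dots> = (if j = n-1 then 1 else 0)" unfolding lone_def m_def using j by auto
  finally show "Q a b 0 (n-1) j = (if j = n-1 then 1 else 0)" .
qed



lemma adj_mat: "mat_adjoint (mat n n f) = mat n n (\<lambda>(i,j). cnj (f (j,i)))"
  unfolding mat_adjoint_def mat_of_rows_def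
  by (rule eq_matI) auto

lemma mm_mat: "mat n n f * mat n n g = mat n n (\<lambda>(i,j). \<Sum>m<n. f (i,m) * g (m,j))"
  by (rule eq_matI) (auto simp: scalar_prod_def atLeast0LessThan)

lemma toep_prod:
  assumes "i < n" "j < n" "dim_vec v = n"
  shows "(lower_toeplitz n v * mat_adjoint (lower_toeplitz n v)) $$ (i,j)
     = (\<Sum>t\<le>min i j. v $ (i - t) * cnj (v $ (j - t)))"
proof -
  have "(lower_toeplitz n v * mat_adjoint (lower_toeplitz n v)) $$ (i,j)
     = (\<Sum>m<n. (if m \<le> i then v $ (i - m) else 0) * cnj (if m \<le> j then v $ (j - m) else 0))"
    using assms unfolding lower_toeplitz_def adj_mat mm_mat by simp
  also have "\<dots> = (\<Sum>m\<in>{..min i j}. (if m \<le> i then v $ (i - m) else 0) * cnj (if m \<le> j then v $ (j - m) else 0))"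
    using assms by (intro sum.mono_neutral_right) auto
  also have "\<dots> = (\<Sum>m\<in>{..min i j}. v $ (i - m) * cnj (v $ (j - m)))"
    by (rule sum.cong) auto
  finally show ?thesis .
qed

lemma toep_dims: "dim_row (lower_toeplitz n v * mat_adjoint (lower_toeplitz n v)) = n"
   "dim_col (lower_toeplitz n v * mat_adjoint (lower_toeplitz n v)) = n"
   "dim_row (lower_toeplitz n v) = n" "dim_col (mat_adjoint (lower_toeplitz n v)) = n"
  unfolding lower_toeplitz_def adj_mat by simp_all

lemma main_aux:
  fixes n :: nat and a b :: "int \<Rightarrow> complex"
  assumes n1: "n \<ge> 1"
    and S: "(a, b) \<in> S_class"
    and bs: "\<forall>k. (k < 0 \<or> k > int n - 1) \<longrightarrow> b k = 0"
  shows "K_mat n a b = L_mat n a b * D_mat n a b * mat_adjoint (L_mat n a b)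
    \<and> L_mat n a b *\<^sub>v gamma_vec n a b = (1 / acoef n a b 0 0) \<cdot>\<^sub>v b0_vec n a b"
proof -
  have la: "laurent a" and lb: "laurent b"
    and idf: "(\<lambda>m. lmult a (lstar a) m + lmult b (lstar b) m) = lone"
    and neg: "\<forall>k<0. lstar a k = 0" and im0: "Im (lstar a 0) = 0" and re0: "0 < Re (lstar a 0)"
    using S unfolding S_class_def by auto
  have idt: "\<forall>m. lmult a (lstar a) m + lmult b (lstar b) m = lone m"
    using idf by (metis)
  define r0 where "r0 = Re (lstar a 0)"
  have A0: "lstar a 0 = complex_of_real r0" using im0 unfolding r0_def by (simp add: complex_eq_iff)
  have al00: "al a b 0 0 = complex_of_real r0" unfolding al_def using A0 by simp
  have r0p: "r0 > 0" using re0 unfolding r0_def .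
  have P: "\<forall>k. \<exists>r>0. al a b k 0 = complex_of_real r"
    using al0_pos[OF al00 r0p] by blast
  have B: "\<forall>k. be a b (Suc k) (-1) = 0"
  proof
    fix k obtain r where "r > 0" "al a b k 0 = complex_of_real r" using P by blast
    thus "be a b (Suc k) (-1) = 0" using step0(2) by blast
  qed
  have NZ: "\<forall>k. al a b k 0 \<noteq> 0"
  proof
    fix k obtain r where "r > 0" "al a b k 0 = complex_of_real r" using P by blast
    thus "al a b k 0 \<noteq> 0" by simp
  qed
  have a0nz: "lstar a 0 \<noteq> 0" using A0 r0p by simp
  have H0': "\<forall>j\<le>n-1. Q a b 0 (n-1) j = (if j = n-1 then 1 else 0)"
    by (rule H0[OF la neg a0nz idt bs n1])
  have "\<forall>j\<le>n-1-(n-1). Q a b (n-1) (n-1-(n-1)) j = (if j = n-1-(n-1) then 1 else 0)"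
    by (rule H_ind[OF B NZ H0']) simp
  hence q1: "Q a b (n-1) 0 0 = 1" by simp
  have "Q a b (n-1) 0 0 = al a b n 0 * cnj (al a b n 0)"
    using Q_rec[OF B, of "n-1" 0 0] n1 by simp
  hence alnn: "al a b n 0 * cnj (al a b n 0) = 1" using q1 by simp
  have aln: "al a b n 0 = 1"
  proof -
    obtain r where r: "r > 0" "al a b n 0 = complex_of_real r" using P by blast
    hence "complex_of_real (r * r) = 1" using alnn by simp
    hence "r * r = 1" by (metis of_real_eq_1_iff)
    hence "r = 1" using r(1) by (metis mult_cancel_left1 nle_le not_one_le_zero mult_le_cancel_left1 less_eq_real_def)
    thus ?thesis using r by simp
  qed
  have ac: "\<And>j k. k \<le> n \<Longrightarrow> acoef n a b j k = al a b k (int j)"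
    unfolding acoef_def using aln unfolding al_def by auto
  define Lf where "Lf = (\<lambda>(i,k). if k \<le> i then al a b (k+1) (int (i-k)) / al a b (k+1) 0 else (0::complex))"
  define Df where "Df = (\<lambda>(i,k::nat). if i = k then (al a b (k+1) 0)^2 else (0::complex))"
  have Leq: "L_mat n a b = mat n n Lf"
    unfolding L_mat_def Lf_def by (rule eq_matI) (auto simp: ac)
  have Deq: "D_mat n a b = mat n n Df"
    unfolding D_mat_def Df_def by (rule eq_matI) (auto simp: ac)
  have a0v: "\<And>x. x < n \<Longrightarrow> a0_vec n a b $ x = al a b 0 (int x)"
    unfolding a0_vec_def using ac n1 by simp
  have b0v: "\<And>x. x < n \<Longrightarrow> b0_vec n a b $ x = be a b 0 (int x)"
    unfolding b0_vec_def bcoef_def be_def by simp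
  have da: "dim_vec (a0_vec n a b) = n" by (simp add: a0_vec_def)
  have db: "dim_vec (b0_vec n a b) = n" by (simp add: b0_vec_def)
  have part1: "K_mat n a b = L_mat n a b * D_mat n a b * mat_adjoint (L_mat n a b)"
  proof (rule eq_matI)
    show "dim_row (K_mat n a b) = dim_row (L_mat n a b * D_mat n a b * mat_adjoint (L_mat n a b))"
      unfolding K_mat_def Leq Deq lower_toeplitz_def adj_mat by simp
    show "dim_col (K_mat n a b) = dim_col (L_mat n a b * D_mat n a b * mat_adjoint (L_mat n a b))"
      unfolding K_mat_def Leq Deq lower_toeplitz_def adj_mat by simp
    fix i j assume i: "i < dim_row (L_mat n a b * D_mat n a b * mat_adjoint (L_mat n a b))"
      and j: "j < dim_col (L_mat n a b * D_mat n a b * mat_adjoint (L_mat n a b))"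
    hence i: "i < n" and j: "j < n" unfolding Leq Deq adj_mat by auto
    have "K_mat n a b $$ (i,j) = (\<Sum>t\<le>min i j. a0_vec n a b $ (i - t) * cnj (a0_vec n a b $ (j - t)))
       + (\<Sum>t\<le>min i j. b0_vec n a b $ (i - t) * cnj (b0_vec n a b $ (j - t)))"
      unfolding K_mat_def using i j
      by (subst index_add_mat) (simp_all add: toep_prod toep_dims da db del: index_mult_mat)
    also have "\<dots> = Q a b 0 i j"
      unfolding Q_def sum.distrib using i j
      by (intro arg_cong2[where f="(+)"] sum.cong) (auto simp: a0v b0v)
    also have "\<dots> = (\<Sum>t\<le>min i j. al a b (t+1) (int (i-t)) * cnj (al a b (t+1) (int (j-t))))"
      using Q_closed[OF B, of 0 i j] by simp
    also have "\<dots> = (L_mat n a b * D_mat n a b * mat_adjoint (L_mat n a b)) $$ (i,j)"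
    proof -
      have "(L_mat n a b * D_mat n a b * mat_adjoint (L_mat n a b)) $$ (i,j)
          = (\<Sum>k<n. (\<Sum>m<n. Lf (i,m) * Df (m,k)) * cnj (Lf (j,k)))"
        unfolding Leq Deq adj_mat mm_mat using i j by simp
      also have "\<dots> = (\<Sum>k<n. Lf (i,k) * Df (k,k) * cnj (Lf (j,k)))"
      proof (rule sum.cong)
        fix k assume k: "k \<in> {..<n}"
        have "(\<Sum>m<n. Lf (i,m) * Df (m,k)) = (\<Sum>m\<in>{k}. Lf (i,m) * Df (m,k))"
          using k by (intro sum.mono_neutral_right) (auto simp: Df_def)
        thus "(\<Sum>m<n. Lf (i,m) * Df (m,k)) * cnj (Lf (j,k)) = Lf (i,k) * Df (k,k) * cnj (Lf (j,k))"
          by simp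
      qed simp
      also have "\<dots> = (\<Sum>k\<in>{..min i j}. Lf (i,k) * Df (k,k) * cnj (Lf (j,k)))"
        using i j by (intro sum.mono_neutral_right) (auto simp: Lf_def)
      also have "\<dots> = (\<Sum>t\<le>min i j. al a b (t+1) (int (i-t)) * cnj (al a b (t+1) (int (j-t))))"
      proof (rule sum.cong)
        fix k assume k: "k \<in> {..min i j}"
        obtain r where r: "r > 0" "al a b (k+1) 0 = complex_of_real r" using P by blast
        have rz: "complex_of_real r \<noteq> 0" using r by simp
        have "Lf (i,k) * Df (k,k) * cnj (Lf (j,k))
          = al a b (k+1) (int (i-k)) / complex_of_real r * (complex_of_real r)^2 * (cnj (al a b (k+1) (int (j-k))) / complex_of_real r)"
          using k r unfolding Lf_def Df_def by simp
        also have "\<dots> = al a b (k+1) (int (i-k)) * cnj (al a b (k+1) (int (j-k)))"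
          using rz by (simp add: power2_eq_square)
        finally show "Lf (i,k) * Df (k,k) * cnj (Lf (j,k)) = al a b (k+1) (int (i-k)) * cnj (al a b (k+1) (int (j-k)))" .
      qed simp
      finally show ?thesis by simp
    qed
    finally show "K_mat n a b $$ (i,j) = (L_mat n a b * D_mat n a b * mat_adjoint (L_mat n a b)) $$ (i,j)" .
  qed
  have part2: "L_mat n a b *\<^sub>v gamma_vec n a b = (1 / acoef n a b 0 0) \<cdot>\<^sub>v b0_vec n a b"
  proof (rule eq_vecI)
    show "dim_vec (L_mat n a b *\<^sub>v gamma_vec n a b) = dim_vec ((1 / acoef n a b 0 0) \<cdot>\<^sub>v b0_vec n a b)"
      unfolding Leq using db by simp
    fix i assume "i < dim_vec ((1 / acoef n a b 0 0) \<cdot>\<^sub>v b0_vec n a b)"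
    hence i: "i < n" using db by simp
    have "(L_mat n a b *\<^sub>v gamma_vec n a b) $ i = (\<Sum>k<n. Lf (i,k) * ls_gam a b k)"
      unfolding Leq gamma_vec_def using i by (simp add: scalar_prod_def atLeast0LessThan)
    also have "\<dots> = (\<Sum>k\<in>{..i}. Lf (i,k) * ls_gam a b k)"
      using i by (intro sum.mono_neutral_right) (auto simp: Lf_def)
    also have "\<dots> = (\<Sum>t\<le>i. ls_gam a b (0+t) * al a b (0+t+1) (int (i-t)) / al a b (0+t+1) 0)"
      by (rule sum.cong) (auto simp: Lf_def)
    also have "\<dots> = be a b 0 (int i) / al a b 0 0"
      using gam_sum[OF P, of 0 i] by simp
    also have "\<dots> = ((1 / acoef n a b 0 0) \<cdot>\<^sub>v b0_vec n a b) $ i"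
      using i n1 ac[of 0 0] b0v[OF i] db by simp
    finally show "(L_mat n a b *\<^sub>v gamma_vec n a b) $ i = ((1 / acoef n a b 0 0) \<cdot>\<^sub>v b0_vec n a b) $ i" .
  qed
  show ?thesis using part1 part2 by blast
qed


theorem lemma5p3:
  fixes n :: nat and a b :: "int \<Rightarrow> complex"
  assumes "n \<ge> 1"
    and "(a, b) \<in> S_class"
    and "\<forall>k. (k < 0 \<or> k > int n - 1) \<longrightarrow> b k = 0"
  shows "K_mat n a b = L_mat n a b * D_mat n a b * mat_adjoint (L_mat n a b)
    \<and> L_mat n a b *\<^sub>v gamma_vec n a b = (1 / acoef n a b 0 0) \<cdot>\<^sub>v b0_vec n a b"
  by (rule main_aux[OF assms])

end
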